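(* Let $n\ge3$ and let $\mathbf A_1,\mathbf A_2,\mathbf A_3,\mathbf A_4$ be algebras whose only operations are ternary operations $t_1,\dots,t_{n-1}$. Suppose that for $j=1,2,3$ there is an element $0\in A_j$ with $t_h(0,y,z)=0$ for $h=1,\dots,n-2$ and $t_h(x,y,0)=0$ for $h=2,\dots,n-1$ (for all $x,y,z\in A_j$), and that in $\mathbf A_4$, $t_1$ is the projection onto the first coordinate, $t_{n-1}$ is the projection onto the third coordinate, and $t_h(x,y,x)=x$ for $h=2,\dots,n-2$. Fix $a,d\in A_4$ and let $B=B(a,d)$ be the set of elements of $E=A_1\times A_2\times A_3\times A_4$ having at least one of the forms $(\ast,0,\ast,a)$, $(0,0,\ast,\ast)$, $(0,\ast,\ast,d)$, $(\ast,\ast,0,\ast)$, where $\ast$ denotes an arbitrary element of the corresponding factor. Then $B$ is the universe of a subalgebra of $\mathbf A_1\times\mathbf A_2\times\mathbf A_3\times\mathbf A_4$. *)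

theory Defs
  imports Main
begin

definition tern_algebra :: "nat \<Rightarrow> 'a set \<Rightarrow> (nat \<Rightarrow> 'a \<Rightarrow> 'a \<Rightarrow> 'a \<Rightarrow> 'a) \<Rightarrow> bool" where
  "tern_algebra n A t \<longleftrightarrow>
     (\<forall>h\<in>{1..n-1}. \<forall>x\<in>A. \<forall>y\<in>A. \<forall>z\<in>A. t h x y z \<in> A)"

definition prod4_op ::
  "(nat \<Rightarrow> 'a \<Rightarrow> 'a \<Rightarrow> 'a \<Rightarrow> 'a) \<Rightarrow> (nat \<Rightarrow> 'b \<Rightarrow> 'b \<Rightarrow> 'b \<Rightarrow> 'b) \<Rightarrow>
   (nat \<Rightarrow> 'c \<Rightarrow> 'c \<Rightarrow> 'c \<Rightarrow> 'c) \<Rightarrow> (nat \<Rightarrow> 'd \<Rightarrow> 'd \<Rightarrow> 'd \<Rightarrow> 'd) \<Rightarrow>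
   nat \<Rightarrow> ('a \<times> 'b \<times> 'c \<times> 'd) \<Rightarrow> ('a \<times> 'b \<times> 'c \<times> 'd) \<Rightarrow> ('a \<times> 'b \<times> 'c \<times> 'd)
   \<Rightarrow> ('a \<times> 'b \<times> 'c \<times> 'd)" where
  "prod4_op t1 t2 t3 t4 h = (\<lambda>(x1,x2,x3,x4) (y1,y2,y3,y4) (z1,z2,z3,z4).
      (t1 h x1 y1 z1, t2 h x2 y2 z2, t3 h x3 y3 z3, t4 h x4 y4 z4))"

definition is_subuniverse :: "nat \<Rightarrow> 'a set \<Rightarrow> (nat \<Rightarrow> 'a \<Rightarrow> 'a \<Rightarrow> 'a \<Rightarrow> 'a) \<Rightarrow> 'a set \<Rightarrow> bool" where
  "is_subuniverse n E t B \<longleftrightarrow> B \<subseteq> E \<and>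
     (\<forall>h\<in>{1..n-1}. \<forall>x\<in>B. \<forall>y\<in>B. \<forall>z\<in>B. t h x y z \<in> B)"

end

theory Submission
  imports Defs
begin

theorem theorem3p2:
  fixes n :: nat
    and A1 :: "'a set" and A2 :: "'b set" and A3 :: "'c set" and A4 :: "'d set"
    and t1 :: "nat \<Rightarrow> 'a \<Rightarrow> 'a \<Rightarrow> 'a \<Rightarrow> 'a"
    and t2 :: "nat \<Rightarrow> 'b \<Rightarrow> 'b \<Rightarrow> 'b \<Rightarrow> 'b"
    and t3 :: "nat \<Rightarrow> 'c \<Rightarrow> 'c \<Rightarrow> 'c \<Rightarrow> 'c"
    and t4 :: "nat \<Rightarrow> 'd \<Rightarrow> 'd \<Rightarrow> 'd \<Rightarrow> 'd"
    and z1 :: 'a and z2 :: 'b and z3 :: 'c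
    and a d :: 'd
  assumes n3: "n \<ge> 3"
    and alg1: "tern_algebra n A1 t1" and alg2: "tern_algebra n A2 t2"
    and alg3: "tern_algebra n A3 t3" and alg4: "tern_algebra n A4 t4"
    and z1A: "z1 \<in> A1"
    and z1L: "\<And>h y z. h \<in> {1..n-2} \<Longrightarrow> y \<in> A1 \<Longrightarrow> z \<in> A1 \<Longrightarrow> t1 h z1 y z = z1"
    and z1R: "\<And>h x y. h \<in> {2..n-1} \<Longrightarrow> x \<in> A1 \<Longrightarrow> y \<in> A1 \<Longrightarrow> t1 h x y z1 = z1"
    and z2A: "z2 \<in> A2"
    and z2L: "\<And>h y z. h \<in> {1..n-2} \<Longrightarrow> y \<in> A2 \<Longrightarrow> z \<in> A2 \<Longrightarrow> t2 h z2 y z = z2"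
    and z2R: "\<And>h x y. h \<in> {2..n-1} \<Longrightarrow> x \<in> A2 \<Longrightarrow> y \<in> A2 \<Longrightarrow> t2 h x y z2 = z2"
    and z3A: "z3 \<in> A3"
    and z3L: "\<And>h y z. h \<in> {1..n-2} \<Longrightarrow> y \<in> A3 \<Longrightarrow> z \<in> A3 \<Longrightarrow> t3 h z3 y z = z3"
    and z3R: "\<And>h x y. h \<in> {2..n-1} \<Longrightarrow> x \<in> A3 \<Longrightarrow> y \<in> A3 \<Longrightarrow> t3 h x y z3 = z3"
    and p1: "\<And>x y z. x \<in> A4 \<Longrightarrow> y \<in> A4 \<Longrightarrow> z \<in> A4 \<Longrightarrow> t4 1 x y z = x"
    and p3: "\<And>x y z. x \<in> A4 \<Longrightarrow> y \<in> A4 \<Longrightarrow> z \<in> A4 \<Longrightarrow> t4 (n-1) x y z = z"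
    and idm: "\<And>h x y. h \<in> {2..n-2} \<Longrightarrow> x \<in> A4 \<Longrightarrow> y \<in> A4 \<Longrightarrow> t4 h x y x = x"
    and aA: "a \<in> A4" and dA: "d \<in> A4"
  shows "is_subuniverse n (A1 \<times> A2 \<times> A3 \<times> A4) (prod4_op t1 t2 t3 t4)
           {(x1, x2, x3, x4) \<in> A1 \<times> A2 \<times> A3 \<times> A4.
              (x2 = z2 \<and> x4 = a) \<or> (x1 = z1 \<and> x2 = z2) \<or> (x1 = z1 \<and> x4 = d) \<or> x3 = z3}"
proof -
  let ?B = "{(x1, x2, x3, x4) \<in> A1 \<times> A2 \<times> A3 \<times> A4.
              (x2 = z2 \<and> x4 = a) \<or> (x1 = z1 \<and> x2 = z2) \<or> (x1 = z1 \<and> x4 = d) \<or> x3 = z3}"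
  have c1: "\<And>h x y z. h \<in> {1..n-1} \<Longrightarrow> x \<in> A1 \<Longrightarrow> y \<in> A1 \<Longrightarrow> z \<in> A1 \<Longrightarrow> t1 h x y z \<in> A1"
    using alg1 unfolding tern_algebra_def by blast
  have c2: "\<And>h x y z. h \<in> {1..n-1} \<Longrightarrow> x \<in> A2 \<Longrightarrow> y \<in> A2 \<Longrightarrow> z \<in> A2 \<Longrightarrow> t2 h x y z \<in> A2"
    using alg2 unfolding tern_algebra_def by blast
  have c3: "\<And>h x y z. h \<in> {1..n-1} \<Longrightarrow> x \<in> A3 \<Longrightarrow> y \<in> A3 \<Longrightarrow> z \<in> A3 \<Longrightarrow> t3 h x y z \<in> A3"
    using alg3 unfolding tern_algebra_def by blast
  have c4: "\<And>h x y z. h \<in> {1..n-1} \<Longrightarrow> x \<in> A4 \<Longrightarrow> y \<in> A4 \<Longrightarrow> z \<in> A4 \<Longrightarrow> t4 h x y z \<in> A4"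
    using alg4 unfolding tern_algebra_def by blast
  have main: "prod4_op t1 t2 t3 t4 h (x1,x2,x3,x4) (y1,y2,y3,y4) (w1,w2,w3,w4) \<in> ?B"
    if h: "h \<in> {1..n-1}" and X: "(x1,x2,x3,x4) \<in> ?B" and Y: "(y1,y2,y3,y4) \<in> ?B"
      and W: "(w1,w2,w3,w4) \<in> ?B" for h x1 x2 x3 x4 y1 y2 y3 y4 w1 w2 w3 w4
  proof -
    have A: "x1 \<in> A1" "x2 \<in> A2" "x3 \<in> A3" "x4 \<in> A4" "y1 \<in> A1" "y2 \<in> A2" "y3 \<in> A3" "y4 \<in> A4"
      "w1 \<in> A1" "w2 \<in> A2" "w3 \<in> A3" "w4 \<in> A4" using X Y W by auto
    have inE: "(t1 h x1 y1 w1, t2 h x2 y2 w2, t3 h x3 y3 w3, t4 h x4 y4 w4) \<in> A1 \<times> A2 \<times> A3 \<times> A4"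
      using c1 c2 c3 c4 A h by blast
    have fx: "(x2 = z2 \<and> x4 = a) \<or> (x1 = z1 \<and> x2 = z2) \<or> (x1 = z1 \<and> x4 = d) \<or> x3 = z3" using X by simp
    have fw: "(w2 = z2 \<and> w4 = a) \<or> (w1 = z1 \<and> w2 = z2) \<or> (w1 = z1 \<and> w4 = d) \<or> w3 = z3" using W by simp
    consider "h = 1" | "h = n - 1" | "h \<in> {2..n-2}" using h n3 by fastforce
    then show ?thesis
    proof cases
      case 1
      have hl: "h \<in> {1..n-2}" using 1 n3 by auto
      show ?thesis using fx inE A unfolding prod4_op_def
        using z1L[OF hl] z2L[OF hl] z3L[OF hl] p1 1 by auto
    next
      case 2
      have hr: "h \<in> {2..n-1}" using 2 n3 by auto
      show ?thesis using fw inE A unfolding prod4_op_def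
        using z1R[OF hr] z2R[OF hr] z3R[OF hr] p3 2 by auto
    next
      case 3
      have hl: "h \<in> {1..n-2}" and hr: "h \<in> {2..n-1}" using 3 by auto
      show ?thesis using fx fw inE A unfolding prod4_op_def
        using z1L[OF hl] z2L[OF hl] z3L[OF hl] z1R[OF hr] z2R[OF hr] z3R[OF hr] idm[OF 3]
        by auto
    qed
  qed
  show ?thesis unfolding is_subuniverse_def
  proof (intro conjI ballI)
    show "?B \<subseteq> A1 \<times> A2 \<times> A3 \<times> A4" by auto
  next
    fix h X Y Z assume "h \<in> {1..n-1}" "X \<in> ?B" "Y \<in> ?B" "Z \<in> ?B"
    moreover obtain x1 x2 x3 x4 where "X = (x1,x2,x3,x4)" by (cases X) auto
    moreover obtain y1 y2 y3 y4 where "Y = (y1,y2,y3,y4)" by (cases Y) auto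
    moreover obtain w1 w2 w3 w4 where "Z = (w1,w2,w3,w4)" by (cases Z) auto
    ultimately show "prod4_op t1 t2 t3 t4 h X Y Z \<in> ?B"
      using main by simp
  qed
qed

end
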